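(* Let $(M,\circ,e)$ be an $F$-manifold with an invariant metric $\tilde g$ and an eventual identity $\mathcal E$. Define the metric $g$ by $$g(X,Y):=\tilde g(\mathcal E^{-1}\circ X,Y).$$ Then the pair $(g,\tilde g)$ is almost compatible. Equivalently, the Nijenhuis tensor of the endomorphism $A:=g^*\tilde g=\mathcal E\circ(\cdot)$ vanishes identically: $$N_A(X,Y)=-[AX,AY]+A([AX,Y]+[X,AY])-A^2[X,Y]=0.$$
   Context: An $F$-manifold $(M,\circ,e)$ is a smooth manifold $M$ together with a commutative, associative, $C^\infty(M)$-bilinear multiplication $\circ$ on $TM$ with unit vector field $e$, such that $$L_{X\circ Y}(\circ)=X\circ L_Y(\circ)+Y\circ L_X(\circ)$$ for all vector fields $X,Y$. Here $$L_Z(\circ)(X,Y):=[Z,X\circ Y]-[Z,X]\circ Y-X\circ[Z,Y].$$ A vector field $\mathcal E$ is invertible if there is a vector field $\mathcal E^{-1}$ with $\mathcal E\circ\mathcal E^{-1}=e$ everywhere on $M$. An eventual identity on $(M,\circ,e)$ is an invertible vector field $\mathcal E$ such that the multiplication $X*Y:=X\circ Y\circ\mathcal E^{-1}$ defines an $F$-manifold structure on $M$ (its unit is $\mathcal E$). A metric means a non-degenerate symmetric bilinear form on $TM$. A metric $\tilde g$ is invariant if $\tilde g(X\circ Y,Z)=\tilde g(X,Y\circ Z)$ for all $X,Y,Z$. For metrics $g,\tilde g$ let $g^*,\tilde g^*$ be the induced inner products on $T^*M$, and let $g^*,\tilde g^*:T^*M\to TM$ and $g,\tilde g:TM\to T^*M$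 also denote the index-raising and index-lowering isomorphisms. Let $g_\lambda^*:=g^*+\lambda\tilde g^*$, assumed non-degenerate for the constants $\lambda$ considered, and let $g_\lambda$ be the corresponding metric. Let $\nabla,\tilde\nabla,\nabla^\lambda$ be the Levi-Civita connections of $g,\tilde g,g_\lambda$, acting on 1-forms. The pair $(g,\tilde g)$ is almost compatible if $$g_\lambda^*(\nabla^\lambda_X\alpha)=g^*(\nabla_X\alpha)+\lambda\tilde g^*(\tilde\nabla_X\alpha)$$ for all vector fields $X$, 1-forms $\alpha$, and constants $\lambda$. By a result of Mokhov, this holds if and only if the Nijenhuis tensor of $g^*\tilde g\in\mathrm{End}(TM)$ vanishes. *)

theory Defs
  imports "HOL-Analysis.Analysis"
begin

text \<open>Local model: the manifold M is an open set U in real^'n (coordinates).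
  Points and tangent vectors are elements of real^'n.\<close>

definition pderiv_fun :: "'n::finite \<Rightarrow> (real^'n \<Rightarrow> real) \<Rightarrow> real^'n \<Rightarrow> real" where
  "pderiv_fun i f x = deriv (\<lambda>t::real. f (x + t *\<^sub>R axis i 1)) 0"

definition iter_pderiv :: "'n::finite list \<Rightarrow> (real^'n \<Rightarrow> real) \<Rightarrow> real^'n \<Rightarrow> real" where
  "iter_pderiv is f = foldr pderiv_fun is f"

definition smooth_fun :: "(real^'n::finite) set \<Rightarrow> (real^'n \<Rightarrow> real) \<Rightarrow> bool" where
  "smooth_fun U f \<longleftrightarrow> (\<forall>is::'n list. continuous_on U (iter_pderiv is f) \<and>
      (\<forall>x\<in>U. \<forall>i. (\<lambda>t::real. iter_pderiv is f (x + t *\<^sub>R axis i 1)) differentiable (at 0)))"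

definition smooth_vf :: "(real^'n::finite) set \<Rightarrow> (real^'n \<Rightarrow> real^'n) \<Rightarrow> bool" where
  "smooth_vf U X \<longleftrightarrow> (\<forall>k. smooth_fun U (\<lambda>p. X p $ k))"

definition lie :: "(real^'n::finite \<Rightarrow> real^'n) \<Rightarrow> (real^'n \<Rightarrow> real^'n) \<Rightarrow> real^'n \<Rightarrow> real^'n" where
  "lie X Y p = (\<chi> k. (\<Sum>i\<in>UNIV. X p $ i * pderiv_fun i (\<lambda>q. Y q $ k) p
                              - Y p $ i * pderiv_fun i (\<lambda>q. X q $ k) p))"

text \<open>A multiplication on TU is given pointwise: m p x y is the product of tangent vectors x, y at p.\<close>
type_synonym 'n mult = "real^'n \<Rightarrow> real^'n \<Rightarrow> real^'n \<Rightarrow> real^'n"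

definition vmul :: "'n::finite mult \<Rightarrow> (real^'n \<Rightarrow> real^'n) \<Rightarrow> (real^'n \<Rightarrow> real^'n) \<Rightarrow> real^'n \<Rightarrow> real^'n" where
  "vmul m X Y = (\<lambda>p. m p (X p) (Y p))"

definition lie_mult :: "'n::finite mult \<Rightarrow> (real^'n \<Rightarrow> real^'n) \<Rightarrow> (real^'n \<Rightarrow> real^'n)
     \<Rightarrow> (real^'n \<Rightarrow> real^'n) \<Rightarrow> real^'n \<Rightarrow> real^'n" where
  "lie_mult m Z X Y = (\<lambda>p. lie Z (vmul m X Y) p - vmul m (lie Z X) Y p - vmul m X (lie Z Y) p)"

definition F_manifold :: "(real^'n::finite) set \<Rightarrow> 'n mult \<Rightarrow> (real^'n \<Rightarrow> real^'n) \<Rightarrow> bool" where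
  "F_manifold U m e \<longleftrightarrow>
     open U \<and> smooth_vf U e \<and>
     (\<forall>i j. smooth_vf U (\<lambda>p. m p (axis i 1) (axis j 1))) \<and>
     (\<forall>p\<in>U. bilinear (m p) \<and> (\<forall>x y. m p x y = m p y x) \<and>
             (\<forall>x y z. m p (m p x y) z = m p x (m p y z)) \<and> (\<forall>x. m p (e p) x = x)) \<and>
     (\<forall>X Y Z W. smooth_vf U X \<longrightarrow> smooth_vf U Y \<longrightarrow> smooth_vf U Z \<longrightarrow> smooth_vf U W \<longrightarrow>
        (\<forall>p\<in>U. lie_mult m (vmul m X Y) Z W p
                 = m p (X p) (lie_mult m Y Z W p) + m p (Y p) (lie_mult m X Z W p)))"

definition eventual_identity :: "(real^'n::finite) set \<Rightarrow> 'n mult \<Rightarrow> (real^'n \<Rightarrow> real^'n)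
     \<Rightarrow> (real^'n \<Rightarrow> real^'n) \<Rightarrow> bool" where
  "eventual_identity U m e E \<longleftrightarrow> smooth_vf U E \<and>
     (\<exists>Einv. smooth_vf U Einv \<and> (\<forall>p\<in>U. m p (E p) (Einv p) = e p) \<and>
        F_manifold U (\<lambda>p x y. m p (m p x y) (Einv p)) E)"

definition metric :: "(real^'n::finite) set \<Rightarrow> (real^'n \<Rightarrow> real^'n \<Rightarrow> real^'n \<Rightarrow> real) \<Rightarrow> bool" where
  "metric U g \<longleftrightarrow> (\<forall>i j. smooth_fun U (\<lambda>p. g p (axis i 1) (axis j 1))) \<and>
     (\<forall>p\<in>U. bilinear (g p) \<and> (\<forall>x y. g p x y = g p y x) \<and>
             (\<forall>x. (\<forall>y. g p x y = 0) \<longrightarrow> x = 0))"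

definition invariant_metric :: "(real^'n::finite) set \<Rightarrow> 'n mult \<Rightarrow> (real^'n \<Rightarrow> real^'n \<Rightarrow> real^'n \<Rightarrow> real) \<Rightarrow> bool" where
  "invariant_metric U m g \<longleftrightarrow> metric U g \<and> (\<forall>p\<in>U. \<forall>x y z. g p (m p x y) z = g p x (m p y z))"

text \<open>The endomorphism g^* gt of TM: (g^* gt)(x) is the unique v with g(v,y) = gt(x,y) for all y.\<close>
definition raise_lower :: "(real^'n::finite \<Rightarrow> real^'n \<Rightarrow> real^'n \<Rightarrow> real) \<Rightarrow> (real^'n \<Rightarrow> real^'n \<Rightarrow> real^'n \<Rightarrow> real)
     \<Rightarrow> real^'n \<Rightarrow> real^'n \<Rightarrow> real^'n" where
  "raise_lower g gt p x = (THE v. \<forall>y. g p v y = gt p x y)"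

definition nijenhuis :: "(real^'n::finite \<Rightarrow> real^'n \<Rightarrow> real^'n) \<Rightarrow> (real^'n \<Rightarrow> real^'n)
     \<Rightarrow> (real^'n \<Rightarrow> real^'n) \<Rightarrow> real^'n \<Rightarrow> real^'n" where
  "nijenhuis A X Y p =
     (let AX = (\<lambda>q. A q (X q)); AY = (\<lambda>q. A q (Y q)) in
       - lie AX AY p + A p (lie AX Y p + lie X AY p) - A p (A p (lie X Y p)))"

end

theory Submission imports Defs begin

definition base :: "(real^'n::finite) set \<Rightarrow> (real^'n \<Rightarrow> real) \<Rightarrow> bool" where
  "base U f \<longleftrightarrow> continuous_on U f \<and>
      (\<forall>x\<in>U. \<forall>i. (\<lambda>t::real. f (x + t *\<^sub>R axis i 1)) differentiable (at 0))"

definition sm :: "nat \<Rightarrow> (real^'n::finite) set \<Rightarrow> (real^'n \<Rightarrow> real) \<Rightarrow> bool" where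
  "sm n U f \<longleftrightarrow> (\<forall>is::'n list. length is \<le> n \<longrightarrow> base U (iter_pderiv is f))"

lemma iter_snoc: "iter_pderiv (is @ [i]) f = iter_pderiv is (pderiv_fun i f)"
  by (simp add: iter_pderiv_def)

lemma iter_Cons: "iter_pderiv (i # is) f = pderiv_fun i (iter_pderiv is f)"
  by (simp add: iter_pderiv_def)

lemma iter_Nil: "iter_pderiv [] f = f"
  by (simp add: iter_pderiv_def)

lemma smooth_iff_sm: "smooth_fun U f \<longleftrightarrow> (\<forall>n. sm n U f)"
  unfolding smooth_fun_def sm_def base_def by blast

lemma sm_0: "sm 0 U f \<longleftrightarrow> base U f"
  unfolding sm_def by (simp add: iter_Nil)

lemma sm_Suc: "sm (Suc n) U f \<longleftrightarrow> base U f \<and> (\<forall>i. sm n U (pderiv_fun i f))"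
proof
  assume h: "sm (Suc n) U f"
  show "base U f \<and> (\<forall>i. sm n U (pderiv_fun i f))"
  proof
    show "base U f" using h unfolding sm_def by (metis iter_Nil le0 list.size(3))
    show "\<forall>i. sm n U (pderiv_fun i f)"
      using h unfolding sm_def by (metis iter_snoc length_append_singleton Suc_le_mono)
  qed
next
  assume h: "base U f \<and> (\<forall>i. sm n U (pderiv_fun i f))"
  show "sm (Suc n) U f" unfolding sm_def
  proof (intro allI impI)
    fix "is" :: "'a list" assume l: "length is \<le> Suc n"
    show "base U (iter_pderiv is f)"
    proof (cases "is" rule: rev_exhaust)
      case Nil then show ?thesis using h by (simp add: iter_Nil)
    next
      case (snoc js i)
      then show ?thesis using h l unfolding sm_def by (simp add: iter_snoc)
    qed
  qed
qed

lemma sm_mono: "sm (Suc n) U f \<Longrightarrow> sm n U f"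
  unfolding sm_def by simp

lemma line_ev:
  fixes x a :: "'a::real_normed_vector"
  assumes "open U" "x \<in> U"
  shows "eventually (\<lambda>t::real. x + t *\<^sub>R a \<in> U) (nhds 0)"
proof -
  have "continuous_on UNIV (\<lambda>t::real. x + t *\<^sub>R a)" by (intro continuous_intros)
  then have "open ((\<lambda>t::real. x + t *\<^sub>R a) -` U)" using assms(1) open_vimage by blast
  moreover have "(0::real) \<in> (\<lambda>t::real. x + t *\<^sub>R a) -` U" using assms(2) by simp
  ultimately show ?thesis using eventually_nhds_in_open by fastforce
qed

lemma pderiv_local:
  assumes "open U" "x \<in> U" "\<forall>y\<in>U. f y = g y"
  shows "pderiv_fun i f x = pderiv_fun i g x"
  unfolding pderiv_fun_def
  by (rule deriv_cong_ev) (use eventually_mono[OF line_ev[OF assms(1,2), of "axis i 1"]] assms(3) in auto)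

lemma diff_local:
  fixes f g :: "real^'n::finite \<Rightarrow> real"
  assumes "open U" "x \<in> U" "\<forall>y\<in>U. f y = g y"
    and "(\<lambda>t::real. f (x + t *\<^sub>R a)) differentiable (at 0)"
  shows "(\<lambda>t::real. g (x + t *\<^sub>R a)) differentiable (at 0)"
proof -
  have ev: "eventually (\<lambda>t. f (x + t *\<^sub>R a) = g (x + t *\<^sub>R a)) (nhds (0::real))"
    using eventually_mono[OF line_ev[OF assms(1,2), of a]] assms(3) by auto
  from assms(4) obtain D where "((\<lambda>t::real. f (x + t *\<^sub>R a)) has_field_derivative D) (at 0)"
    using DERIV_deriv_iff_real_differentiable by blast
  then have "((\<lambda>t::real. g (x + t *\<^sub>R a)) has_field_derivative D) (at 0)"
    using DERIV_cong_ev[OF refl ev refl] by simp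
  then show ?thesis using DERIV_deriv_iff_real_differentiable DERIV_imp_deriv by metis
qed

lemma base_local:
  assumes "open U" "\<forall>y\<in>U. f y = g y" "base U f"
  shows "base U g"
  using assms unfolding base_def
  by (metis continuous_on_cong diff_local)

lemma iter_local:
  assumes "open U" "\<forall>y\<in>U. f y = g y"
  shows "\<forall>y\<in>U. iter_pderiv is f y = iter_pderiv is g y"
  using assms(2)
proof (induction "is")
  case Nil then show ?case by (simp add: iter_Nil)
next
  case (Cons i js) then show ?case
    by (simp add: iter_Cons pderiv_local[OF assms(1)])
qed

lemma sm_local:
  assumes "open U" "\<forall>y\<in>U. f y = g y" "sm n U f"
  shows "sm n U g"
  using assms unfolding sm_def by (metis base_local iter_local)

lemma smooth_local:
  assumes "open U" "\<forall>y\<in>U. f y = g y" "smooth_fun U f"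
  shows "smooth_fun U g"
  using assms smooth_iff_sm sm_local by metis

lemma pderiv_add:
  assumes "base U f" "base U g" "x \<in> U"
  shows "pderiv_fun i (\<lambda>y. f y + g y) x = pderiv_fun i f x + pderiv_fun i g x"
proof -
  have "DERIV (\<lambda>t. f (x + t *\<^sub>R axis i 1)) 0 :> pderiv_fun i f x"
    "DERIV (\<lambda>t. g (x + t *\<^sub>R axis i 1)) 0 :> pderiv_fun i g x"
    using assms unfolding base_def pderiv_fun_def
    by (auto simp: DERIV_deriv_iff_real_differentiable)
  then have "DERIV (\<lambda>t. f (x + t *\<^sub>R axis i 1) + g (x + t *\<^sub>R axis i 1)) 0 :> pderiv_fun i f x + pderiv_fun i g x"
    by (rule DERIV_add)
  then show ?thesis unfolding pderiv_fun_def by (rule DERIV_imp_deriv)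
qed

lemma pderiv_mult:
  assumes "base U f" "base U g" "x \<in> U"
  shows "pderiv_fun i (\<lambda>y. f y * g y) x = pderiv_fun i f x * g x + f x * pderiv_fun i g x"
proof -
  have "DERIV (\<lambda>t. f (x + t *\<^sub>R axis i 1)) 0 :> pderiv_fun i f x"
    "DERIV (\<lambda>t. g (x + t *\<^sub>R axis i 1)) 0 :> pderiv_fun i g x"
    using assms unfolding base_def pderiv_fun_def
    by (auto simp: DERIV_deriv_iff_real_differentiable)
  then have "DERIV (\<lambda>t. f (x + t *\<^sub>R axis i 1) * g (x + t *\<^sub>R axis i 1)) 0 :> pderiv_fun i f x * g (x + 0 *\<^sub>R axis i 1) + f (x + 0 *\<^sub>R axis i 1) * pderiv_fun i g x"
    by (auto intro!: derivative_eq_intros)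
  then show ?thesis unfolding pderiv_fun_def by (simp add: DERIV_imp_deriv)
qed

lemma base_add: "base U f \<Longrightarrow> base U g \<Longrightarrow> base U (\<lambda>y. f y + g y)"
  unfolding base_def by (auto intro!: continuous_on_add differentiable_add)

lemma base_mult: "base U f \<Longrightarrow> base U g \<Longrightarrow> base U (\<lambda>y. f y * g y)"
  unfolding base_def by (auto intro!: continuous_on_mult differentiable_mult)

lemma sm_base: "sm n U f \<Longrightarrow> base U f"
  by (induction n) (auto simp: sm_0 dest: sm_mono)

lemma sm_add: "open U \<Longrightarrow> sm n U f \<Longrightarrow> sm n U g \<Longrightarrow> sm n U (\<lambda>y. f y + g y)"
proof (induction n arbitrary: f g)
  case 0 then show ?case by (simp add: sm_0 base_add)
next
  case (Suc n)
  have bf: "base U f" and bg: "base U g" using Suc.prems sm_base by blast+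
  show ?case unfolding sm_Suc
  proof (intro conjI allI)
    show "base U (\<lambda>y. f y + g y)" using bf bg by (rule base_add)
    fix i
    have "sm n U (\<lambda>y. pderiv_fun i f y + pderiv_fun i g y)"
      using Suc by (simp add: sm_Suc)
    then show "sm n U (pderiv_fun i (\<lambda>y. f y + g y))"
      by (rule sm_local[OF \<open>open U\<close>, rotated]) (simp add: pderiv_add[OF bf bg])
  qed
qed

lemma sm_mult: "open U \<Longrightarrow> sm n U f \<Longrightarrow> sm n U g \<Longrightarrow> sm n U (\<lambda>y. f y * g y)"
proof (induction n arbitrary: f g)
  case 0 then show ?case by (simp add: sm_0 base_mult)
next
  case (Suc n)
  have bf: "base U f" and bg: "base U g" using Suc.prems sm_base by blast+
  show ?case unfolding sm_Suc
  proof (intro conjI allI)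
    show "base U (\<lambda>y. f y * g y)" using bf bg by (rule base_mult)
    fix i
    have "sm n U (\<lambda>y. pderiv_fun i f y * g y)"
      using Suc.IH[OF Suc.prems(1)] Suc.prems(2) sm_mono[OF Suc.prems(3)] by (simp add: sm_Suc)
    moreover have "sm n U (\<lambda>y. f y * pderiv_fun i g y)"
      using Suc.IH[OF Suc.prems(1)] Suc.prems(3) sm_mono[OF Suc.prems(2)] by (simp add: sm_Suc)
    ultimately have "sm n U (\<lambda>y. pderiv_fun i f y * g y + f y * pderiv_fun i g y)"
      using sm_add Suc.prems(1) by blast
    then show "sm n U (pderiv_fun i (\<lambda>y. f y * g y))"
      by (rule sm_local[OF \<open>open U\<close>, rotated]) (simp add: pderiv_mult[OF bf bg])
  qed
qed

lemma pderiv_const: "pderiv_fun i (\<lambda>y. c) = (\<lambda>y. 0)"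
  unfolding pderiv_fun_def by simp

lemma sm_const: "sm n U (\<lambda>y. c)"
proof (induction n arbitrary: c)
  case 0 then show ?case by (simp add: sm_0 base_def)
next
  case (Suc n) then show ?case by (simp add: sm_Suc pderiv_const base_def)
qed

lemma smooth_add: "open U \<Longrightarrow> smooth_fun U f \<Longrightarrow> smooth_fun U g \<Longrightarrow> smooth_fun U (\<lambda>y. f y + g y)"
  by (simp add: smooth_iff_sm sm_add)

lemma smooth_mult: "open U \<Longrightarrow> smooth_fun U f \<Longrightarrow> smooth_fun U g \<Longrightarrow> smooth_fun U (\<lambda>y. f y * g y)"
  by (simp add: smooth_iff_sm sm_mult)

lemma smooth_const: "smooth_fun U (\<lambda>y. c)"
  by (simp add: smooth_iff_sm sm_const)

lemma smooth_sum: assumes "open U" "finite S" "\<And>k. k \<in> S \<Longrightarrow> smooth_fun U (f k)" shows "smooth_fun U (\<lambda>y. \<Sum>k\<in>S. f k y)"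
  using assms(2,3) proof (induction S rule: finite_induct)
  case empty then show ?case by (simp add: smooth_const)
next
  case (insert a S) then show ?case by (simp add: smooth_add assms(1))
qed


lemma vec_expand: "(x::real^'n::finite) = (\<Sum>i\<in>UNIV. x$i *\<^sub>R axis i 1)"
  using basis_expansion[of x] by (simp add: scalar_mult_eq_scaleR)

lemma bilin_expand:
  fixes h :: "real^'n::finite \<Rightarrow> real^'n \<Rightarrow> 'b::real_vector"
  assumes "bilinear h"
  shows "h x y = (\<Sum>i\<in>UNIV. \<Sum>j\<in>UNIV. (x$i * y$j) *\<^sub>R h (axis i 1) (axis j 1))"
proof -
  have "h x y = h (\<Sum>i\<in>UNIV. x$i *\<^sub>R axis i 1) (\<Sum>j\<in>UNIV. y$j *\<^sub>R axis j 1)"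
    using vec_expand[of x] vec_expand[of y] by simp
  also have "\<dots> = (\<Sum>(i,j)\<in>UNIV \<times> UNIV. h (x$i *\<^sub>R axis i 1) (y$j *\<^sub>R axis j 1))"
    by (rule bilinear_sum[OF assms])
  also have "\<dots> = (\<Sum>i\<in>UNIV. \<Sum>j\<in>UNIV. h (x$i *\<^sub>R axis i 1) (y$j *\<^sub>R axis j 1))"
    by (simp add: sum.cartesian_product)
  also have "\<dots> = (\<Sum>i\<in>UNIV. \<Sum>j\<in>UNIV. (x$i * y$j) *\<^sub>R h (axis i 1) (axis j 1))"
    by (simp add: bilinear_lmul[OF assms] bilinear_rmul[OF assms] mult.commute)
  finally show ?thesis .
qed

lemma smooth_vf_const: "smooth_vf U (\<lambda>p. v)"
  unfolding smooth_vf_def by (simp add: smooth_const)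

lemma smooth_vf_vmul:
  assumes "open U" "\<forall>p\<in>U. bilinear (m p)"
    "\<forall>i j. smooth_vf U (\<lambda>p. m p (axis i 1) (axis j 1))"
    "smooth_vf U X" "smooth_vf U Y"
  shows "smooth_vf U (vmul m X Y)"
  unfolding smooth_vf_def
proof
  fix k
  have "smooth_fun U (\<lambda>p. \<Sum>i\<in>UNIV. \<Sum>j\<in>UNIV. X p $ i * Y p $ j * (m p (axis i 1) (axis j 1) $ k))"
    using assms by (auto simp: smooth_vf_def intro!: smooth_sum smooth_mult)
  then show "smooth_fun U (\<lambda>p. vmul m X Y p $ k)"
  proof (rule smooth_local[OF assms(1), rotated])
    show "\<forall>y\<in>U. (\<Sum>i\<in>UNIV. \<Sum>j\<in>UNIV. X y $ i * Y y $ j * (m y (axis i 1) (axis j 1) $ k)) = vmul m X Y y $ k"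
      using assms(2) by (simp add: vmul_def bilin_expand[of "m _"] sum_component)
  qed
qed

lemma lie_local:
  assumes "open U" "p \<in> U" "\<forall>q\<in>U. X q = X' q" "\<forall>q\<in>U. Y q = Y' q"
  shows "lie X Y p = lie X' Y' p"
proof -
  have "\<And>i k. pderiv_fun i (\<lambda>q. Y q $ k) p = pderiv_fun i (\<lambda>q. Y' q $ k) p"
    "\<And>i k. pderiv_fun i (\<lambda>q. X q $ k) p = pderiv_fun i (\<lambda>q. X' q $ k) p"
    using assms by (auto intro!: pderiv_local)
  then show ?thesis using assms unfolding lie_def by simp
qed

lemma lie_self: "lie X X p = 0"
  unfolding lie_def by (simp add: vec_eq_iff)

lemma lie_antisym: "lie X Y p = - lie Y X p"
  unfolding lie_def by (simp add: vec_eq_iff sum_negf[symmetric])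


lemma final_alg:
  fixes mul :: "'a::real_vector \<Rightarrow> 'a \<Rightarrow> 'a"
  assumes bil: "bilinear mul" and comm: "\<And>x y. mul x y = mul y x"
    and assoc: "\<And>x y z. mul (mul x y) z = mul x (mul y z)"
    and hF: "a - mul b y - mul E d = mul E (f1 - mul h y - mul E k) + mul x (l - mul n0 y - mul E ov)"
    and n0: "n0 = 0" and hb: "b = - q" and hh: "h = - r"
    and hq: "q = mul (mul c x) ei + mul E r" and hl: "l = mul (mul c y) ei + mul E ov"
  shows "- a + mul E (d + f1) - mul E (mul E k) = 0"
proof -
  have a: "a = mul b y + mul E d + mul E f1 - mul E (mul h y) - mul E (mul E k) + mul x l - mul x (mul E ov)"
    using hF n0 by (simp add: bilinear_radd[OF bil] bilinear_rsub[OF bil] bilinear_lzero[OF bil] bilinear_rzero[OF bil] algebra_simps)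
  have e1: "mul (mul E r) y = mul E (mul r y)" by (rule assoc)
  have e2: "mul (mul (mul c x) ei) y = mul x (mul (mul c y) ei)"
    by (metis assoc comm)
  show ?thesis
    unfolding a hb hh hq hl
    by (simp add: bilinear_radd[OF bil] bilinear_ladd[OF bil] bilinear_lneg[OF bil] bilinear_rneg[OF bil] bilinear_lsub[OF bil] e1 e2 algebra_simps)
qed

theorem proposition3p3:
  fixes U :: "(real^'n::finite) set"
    and m :: "'n mult"
    and e E Einv :: "real^'n \<Rightarrow> real^'n"
    and gt :: "real^'n \<Rightarrow> real^'n \<Rightarrow> real^'n \<Rightarrow> real"
  assumes F: "F_manifold U m e"
    and inv: "invariant_metric U m gt"
    and ev: "eventual_identity U m e E"
    and Einv_smooth: "smooth_vf U Einv"
    and Einv: "\<forall>p\<in>U. m p (E p) (Einv p) = e p"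
  shows "metric U (\<lambda>p x y. gt p (m p (Einv p) x) y)
    \<and> (\<forall>p\<in>U. \<forall>x. raise_lower (\<lambda>p x y. gt p (m p (Einv p) x) y) gt p x = m p (E p) x)
    \<and> (\<forall>X Y. smooth_vf U X \<longrightarrow> smooth_vf U Y \<longrightarrow>
         (\<forall>p\<in>U. nijenhuis (raise_lower (\<lambda>p x y. gt p (m p (Einv p) x) y) gt) X Y p = 0))"
proof -
  define g where "g = (\<lambda>p x y. gt p (m p (Einv p) x) y)"
  have openU: "open U" using F unfolding F_manifold_def by blast
  have mbil: "\<And>p. p \<in> U \<Longrightarrow> bilinear (m p)" using F unfolding F_manifold_def by blast
  have mcomm: "\<And>p x y. p \<in> U \<Longrightarrow> m p x y = m p y x" using F unfolding F_manifold_def by blast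
  have massoc: "\<And>p x y z. p \<in> U \<Longrightarrow> m p (m p x y) z = m p x (m p y z)"
    using F unfolding F_manifold_def by blast
  have munit: "\<And>p x. p \<in> U \<Longrightarrow> m p (e p) x = x" using F unfolding F_manifold_def by blast
  have mentries: "\<forall>i j. smooth_vf U (\<lambda>p. m p (axis i 1) (axis j 1))"
    using F unfolding F_manifold_def by blast
  have Fcond: "\<And>X Y Z W p. smooth_vf U X \<Longrightarrow> smooth_vf U Y \<Longrightarrow> smooth_vf U Z \<Longrightarrow> smooth_vf U W \<Longrightarrow> p \<in> U \<Longrightarrow>
      lie_mult m (vmul m X Y) Z W p = m p (X p) (lie_mult m Y Z W p) + m p (Y p) (lie_mult m X Z W p)"
    using F unfolding F_manifold_def by blast
  have gtmet: "metric U gt" using inv unfolding invariant_metric_def by blast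
  have gtinv: "\<And>p x y z. p \<in> U \<Longrightarrow> gt p (m p x y) z = gt p x (m p y z)"
    using inv unfolding invariant_metric_def by blast
  have gtbil: "\<And>p. p \<in> U \<Longrightarrow> bilinear (gt p)" using gtmet unfolding metric_def by blast
  have gtsym: "\<And>p x y. p \<in> U \<Longrightarrow> gt p x y = gt p y x" using gtmet unfolding metric_def by blast
  have gtnd: "\<And>p x. p \<in> U \<Longrightarrow> (\<forall>y. gt p x y = 0) \<Longrightarrow> x = 0" using gtmet unfolding metric_def by blast
  have gtent: "\<And>i j. smooth_fun U (\<lambda>p. gt p (axis i 1) (axis j 1))" using gtmet unfolding metric_def by blast
  have Esm: "smooth_vf U E" using ev unfolding eventual_identity_def by blast
  obtain Ei where Eism: "smooth_vf U Ei" and EEi: "\<forall>p\<in>U. m p (E p) (Ei p) = e p"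
    and Fs: "F_manifold U (\<lambda>p x y. m p (m p x y) (Ei p)) E"
    using ev unfolding eventual_identity_def by blast
  have inv1: "\<And>p x. p \<in> U \<Longrightarrow> m p (Einv p) (m p (E p) x) = x"
    using Einv massoc mcomm munit by metis
  have inv2: "\<And>p x. p \<in> U \<Longrightarrow> m p (E p) (m p (Einv p) x) = x"
    using Einv massoc mcomm munit by metis
  have met: "metric U g"
    unfolding metric_def
  proof (intro conjI allI ballI impI)
    fix i j
    have "smooth_fun U (\<lambda>p. \<Sum>r\<in>UNIV. \<Sum>s\<in>UNIV. (vmul m Einv (\<lambda>_. axis i 1) p $ r * axis j 1 $ s) * gt p (axis r 1) (axis s 1))"
      using smooth_vf_vmul[OF openU _ mentries Einv_smooth smooth_vf_const, of "axis i 1"] mbil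
      by (auto simp: smooth_vf_def intro!: smooth_sum smooth_mult openU smooth_const gtent)
    then show "smooth_fun U (\<lambda>p. g p (axis i 1) (axis j 1))"
      by (rule smooth_local[OF openU, rotated])
        (simp add: g_def vmul_def bilin_expand[OF gtbil, of _ "m _ (Einv _) (axis i 1)"])
  next
    fix p assume pU: "p \<in> U"
    show "bilinear (g p)"
      unfolding bilinear_def g_def
    proof (intro conjI allI)
      fix x show "linear (\<lambda>y. gt p (m p (Einv p) x) y)"
        using gtbil[OF pU] unfolding bilinear_def by blast
    next
      fix y
      have "linear (m p (Einv p))" using mbil[OF pU] unfolding bilinear_def by blast
      moreover have "linear (\<lambda>z. gt p z y)" using gtbil[OF pU] unfolding bilinear_def by blast
      ultimately have "linear ((\<lambda>z. gt p z y) \<circ> m p (Einv p))" by (rule linear_compose)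
      then show "linear (\<lambda>x. gt p (m p (Einv p) x) y)" by (simp add: o_def)
    qed
    fix x y
    show "g p x y = g p y x"
      unfolding g_def using gtinv[OF pU] gtsym[OF pU] mcomm[OF pU] by metis
  next
    fix p x assume pU: "p \<in> U" and h: "\<forall>y. g p x y = 0"
    then have "m p (Einv p) x = 0" using gtnd[OF pU] unfolding g_def by blast
    then have "m p (E p) (m p (Einv p) x) = 0" using bilinear_rzero[OF mbil[OF pU]] by simp
    then show "x = 0" using inv2[OF pU] by simp
  qed
  have rl: "\<And>p x. p \<in> U \<Longrightarrow> raise_lower g gt p x = m p (E p) x"
  proof -
    fix p x assume pU: "p \<in> U"
    show "raise_lower g gt p x = m p (E p) x"
      unfolding raise_lower_def
    proof (rule the_equality)
      show "\<forall>y. g p (m p (E p) x) y = gt p x y" unfolding g_def using inv1[OF pU] by simp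
    next
      fix v assume hv: "\<forall>y. g p v y = gt p x y"
      have "\<forall>y. gt p (m p (Einv p) v - x) y = 0"
        using hv bilinear_lsub[OF gtbil[OF pU]] unfolding g_def by simp
      then have "m p (Einv p) v - x = 0" using gtnd[OF pU] by blast
      then have "m p (Einv p) v = x" by simp
      then show "v = m p (E p) x" using inv2[OF pU] by metis
    qed
  qed
  have nij: "nijenhuis (raise_lower g gt) X Y p = 0"
    if Xs: "smooth_vf U X" and Ys: "smooth_vf U Y" and pU: "p \<in> U" for X Y p
  proof -
    have mbilU: "\<forall>p\<in>U. bilinear (m p)" using mbil by blast
    define Xe where "Xe = vmul m E X"
    define Ye where "Ye = vmul m E Y"
    define Ee where "Ee = vmul m E E"
    have EEs: "smooth_vf U Ee" unfolding Ee_def by (rule smooth_vf_vmul[OF openU mbilU mentries Esm Esm])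
    define ms where "ms = (\<lambda>p x y. m p (m p x y) (Ei p))"
    have Fscond: "\<And>X Y Z W p. smooth_vf U X \<Longrightarrow> smooth_vf U Y \<Longrightarrow> smooth_vf U Z \<Longrightarrow> smooth_vf U W \<Longrightarrow> p \<in> U \<Longrightarrow>
      lie_mult ms (vmul ms X Y) Z W p = ms p (X p) (lie_mult ms Y Z W p) + ms p (Y p) (lie_mult ms X Z W p)"
      using Fs unfolding F_manifold_def ms_def by blast
    have ms_unit: "\<And>q v. q \<in> U \<Longrightarrow> ms q (E q) v = v"
      unfolding ms_def using massoc mcomm munit EEi by metis
    have msEE: "\<And>q. q \<in> U \<Longrightarrow> vmul ms E E q = E q"
      unfolding vmul_def using ms_unit by blast
    have key: "lie E (vmul m E W) p = m p (m p (lie E Ee p) (W p)) (Ei p) + m p (E p) (lie E W p)"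
      if Ws: "smooth_vf U W" for W
    proof -
      define L where "L = lie_mult ms E Ee W p"
      have H: "lie_mult ms (vmul ms E E) Ee W p = ms p (E p) L + ms p (E p) L"
        using Fscond[OF Esm Esm EEs Ws pU] unfolding L_def .
      have H2: "lie_mult ms (vmul ms E E) Ee W p = L"
      proof -
        have "\<And>Z. lie (vmul ms E E) Z p = lie E Z p"
          by (rule lie_local[OF openU pU]) (auto simp: msEE)
        then show ?thesis unfolding L_def lie_mult_def by (simp add: vmul_def)
      qed
      have "L = 0" using H H2 ms_unit[OF pU] by simp
      moreover have "lie E (vmul ms Ee W) p = lie E (vmul m E W) p"
      proof (rule lie_local[OF openU pU])
        show "\<forall>q\<in>U. vmul ms Ee W q = vmul m E W q"
          unfolding vmul_def ms_def Ee_def using massoc mcomm munit EEi by metis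
      qed auto
      moreover have "vmul ms Ee (lie E W) p = m p (E p) (lie E W p)"
        unfolding vmul_def ms_def Ee_def using massoc mcomm munit EEi pU by metis
      ultimately show ?thesis unfolding L_def lie_mult_def
        by (simp add: vmul_def ms_def algebra_simps)
    qed
    have AX: "\<forall>q\<in>U. raise_lower g gt q (X q) = Xe q" unfolding Xe_def vmul_def using rl by blast
    have AY: "\<forall>q\<in>U. raise_lower g gt q (Y q) = Ye q" unfolding Ye_def vmul_def using rl by blast
    have nexp: "nijenhuis (raise_lower g gt) X Y p = - lie Xe Ye p + m p (E p) (lie Xe Y p + lie X Ye p)
        - m p (E p) (m p (E p) (lie X Y p))"
    proof -
      have "lie (\<lambda>q. raise_lower g gt q (X q)) (\<lambda>q. raise_lower g gt q (Y q)) p = lie Xe Ye p"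
        by (rule lie_local[OF openU pU AX AY])
      moreover have "lie (\<lambda>q. raise_lower g gt q (X q)) Y p = lie Xe Y p"
        by (rule lie_local[OF openU pU AX]) simp
      moreover have "lie X (\<lambda>q. raise_lower g gt q (Y q)) p = lie X Ye p"
        by (rule lie_local[OF openU pU _ AY]) simp
      ultimately show ?thesis unfolding nijenhuis_def Let_def by (simp add: rl[OF pU])
    qed
    have hF: "lie Xe Ye p - m p (lie Xe E p) (Y p) - m p (E p) (lie Xe Y p)
        = m p (E p) (lie X Ye p - m p (lie X E p) (Y p) - m p (E p) (lie X Y p))
          + m p (X p) (lie E Ye p - m p (lie E E p) (Y p) - m p (E p) (lie E Y p))"
      using Fcond[OF Esm Xs Esm Ys pU] unfolding lie_mult_def Xe_def Ye_def
      by (simp add: vmul_def)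
    have "- lie Xe Ye p + m p (E p) (lie Xe Y p + lie X Ye p) - m p (E p) (m p (E p) (lie X Y p)) = 0"
    proof (rule final_alg[OF mbil[OF pU] mcomm[OF pU] massoc[OF pU] hF])
      show "lie E E p = 0" by (rule lie_self)
      show "lie Xe E p = - lie E Xe p" by (rule lie_antisym)
      show "lie X E p = - lie E X p" by (rule lie_antisym)
      show "lie E Xe p = m p (m p (lie E Ee p) (X p)) (Ei p) + m p (E p) (lie E X p)"
        unfolding Xe_def by (rule key[OF Xs])
      show "lie E Ye p = m p (m p (lie E Ee p) (Y p)) (Ei p) + m p (E p) (lie E Y p)"
        unfolding Ye_def by (rule key[OF Ys])
    qed
    then show ?thesis using nexp by simp
  qed
  show ?thesis using met rl nij unfolding g_def by blast
qed

end
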